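(* Assume the setup in the context, including Assumption Generic. Then, for $P$-almost every $z$, the set $\arg\min_{t\in T}Q(t,z)$ contains at most one point (i.e., the argmin of $Q(\cdot,z)$ over $T$ is unique almost surely).
   Context: Assumption Absolute Continuity: $z$ is an absolutely continuous random vector in $\mathbb{R}^{d_z}$ with distribution $P$, and $\mathcal{Z}\subset\mathbb{R}^{d_z}$ is a measurable set with $P(z\in\mathcal{Z})=1$. Assumption Manifold: $T=\bigcup_{j\in J}T_j$ is a disjoint union of finitely or countably many second-countable Hausdorff manifolds, possibly with boundary or corner; here a manifold with boundary or corner of dimension $d$ is a space in which every point has a neighborhood diffeomorphic (via a continuously differentiable map with continuously differentiable inverse) to a relatively open subset of $\mathbb{R}_+^d=[0,\infty)^d$. For each $t\in T_j$, $A(t)$ is a given subset of the tangent cone of $T_j$ at $t$ (the set of derivatives at $0$ of differentiable curves in $T_j$ starting at $t$). For $\Delta\in A(t)$, $\frac{d}{dh}Q(t+h\Delta,z)|_{h=0}$ denotes the (one-sided) directional derivative of $Q(\cdot,z)$ at $t$ in the direction $\Delta$. Assumption Continuous Differentiability: $Q:T\times\mathcal{Z}\to\mathbb{R}$ and for each $j\in J$: (a) $Q$ is continuous on $T_j\times\mathcal{Z}$; (b) for every $(t,z)\in T_j\times\mathcal{Z}$, $Q(t,z)$ is differentiable in $z$ and the derivative $\frac{d}{dz}Q(t,z)$ is continuous in $(t,z)$; (c) for every $(t,z)\in T_j\times\mathcal{Z}$ and $\Delta\in A(t)$, $Q$ is differentiable in $t$ in direction $\Delta$, and this derivative is continuous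 in $(t,z)$. Assumption Generic: let $\Xi=\{(t,s,z): z\in\mathcal{Z},\ t,s\in T,\ t\neq s\}$ and $\xi(t,s,z)=Q(t,z)-Q(s,z)$. For every $(t,s,z)\in\Xi$ at least one of the following holds: (a) $\xi(t,s,z)\neq0$; (b) there is $\Delta\in A(t)$ with $\frac{d}{dh}\xi(t+h\Delta,s,z)|_{h=0}<0$; (c) there is $\Delta\in A(s)$ with $\frac{d}{dh}\xi(t,s+h\Delta,z)|_{h=0}>0$; (d) $\frac{d}{dz}\xi(t,s,z)\neq0$. *)

theory Defs
  imports "HOL-Analysis.Analysis" "HOL-Analysis.Finite_Function_Topology" "HOL-Probability.Probability"
begin

text \<open>Coordinates: the space R^d is realised inside the real normed vector space
  of finitely supported real sequences (nat to real, finite support) as the vectors supported in {..<d}.\<close>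

type_synonym coord = "nat \<Rightarrow>\<^sub>0 real"

definition Rsp :: "nat \<Rightarrow> coord set" where
  "Rsp d = {x. Poly_Mapping.keys x \<subseteq> {..<d}}"

definition quadrant :: "nat \<Rightarrow> coord set" where
  "quadrant d = {x \<in> Rsp d. \<forall>i. 0 \<le> Poly_Mapping.lookup x i}"

definition C1_on :: "coord set \<Rightarrow> (coord \<Rightarrow> coord) \<Rightarrow> bool" where
  "C1_on S f \<longleftrightarrow> (\<exists>f' :: coord \<Rightarrow> (coord \<Rightarrow>\<^sub>L coord).
      (\<forall>x\<in>S. (f has_derivative blinfun_apply (f' x)) (at x within S)) \<and> continuous_on S f')"

definition chart_on :: "'p topology \<Rightarrow> nat \<Rightarrow> 'p set \<Rightarrow> ('p \<Rightarrow> coord) \<Rightarrow> bool" where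
  "chart_on X d U \<phi> \<longleftrightarrow> openin X U \<and> \<phi> ` U \<subseteq> quadrant d \<and>
     openin (top_of_set (quadrant d)) (\<phi> ` U) \<and>
     homeomorphic_map (subtopology X U) (top_of_set (\<phi> ` U)) \<phi>"

definition C1_atlas :: "'p topology \<Rightarrow> nat \<Rightarrow> ('p set \<times> ('p \<Rightarrow> coord)) set \<Rightarrow> bool" where
  "C1_atlas X d atlas \<longleftrightarrow>
     (\<forall>(U, \<phi>)\<in>atlas. chart_on X d U \<phi>) \<and>
     (\<forall>x\<in>topspace X. \<exists>(U, \<phi>)\<in>atlas. x \<in> U) \<and>
     (\<forall>(U, \<phi>)\<in>atlas. \<forall>(V, \<psi>)\<in>atlas. C1_on (\<phi> ` (U \<inter> V)) (\<psi> \<circ> inv_into U \<phi>))"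

definition manifold_with_corners :: "'p topology \<Rightarrow> nat \<Rightarrow> ('p set \<times> ('p \<Rightarrow> coord)) set \<Rightarrow> bool" where
  "manifold_with_corners X d atlas \<longleftrightarrow>
     Hausdorff_space X \<and> second_countable X \<and> C1_atlas X d atlas"

definition curve_vel :: "'p set \<Rightarrow> ('p \<Rightarrow> coord) \<Rightarrow> 'p \<Rightarrow> (real \<Rightarrow> 'p) \<Rightarrow> coord \<Rightarrow> bool" where
  "curve_vel U \<phi> t \<gamma> v \<longleftrightarrow> \<gamma> 0 = t \<and>
     (\<exists>\<epsilon>>0. \<gamma> ` {0..<\<epsilon>} \<subseteq> U \<and>
        (\<forall>h\<in>{0..<\<epsilon>}. (\<phi> \<circ> \<gamma>) differentiable (at h within {0..<\<epsilon>})) \<and>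
        ((\<phi> \<circ> \<gamma>) has_vector_derivative v) (at 0 within {0..<\<epsilon>}))"

text \<open>Tangent cone of the manifold at t, tangent vectors being represented by
  differentiable curves starting at t.\<close>
definition tangent_cone_curves :: "('p set \<times> ('p \<Rightarrow> coord)) set \<Rightarrow> 'p \<Rightarrow> (real \<Rightarrow> 'p) set" where
  "tangent_cone_curves atlas t = {\<gamma>. \<exists>(U, \<phi>)\<in>atlas. \<exists>v. curve_vel U \<phi> t \<gamma> v}"

definition coord_vels :: "'p set \<Rightarrow> ('p \<Rightarrow> coord) \<Rightarrow> 'p \<Rightarrow> (real \<Rightarrow> 'p) set \<Rightarrow> coord set" where
  "coord_vels U \<phi> t \<Gamma> = {v. \<exists>\<gamma>\<in>\<Gamma>. curve_vel U \<phi> t \<gamma> v}"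

definition dir_deriv :: "'p set \<Rightarrow> ('p \<Rightarrow> coord) \<Rightarrow> ('p \<Rightarrow> real) \<Rightarrow> 'p \<Rightarrow> coord \<Rightarrow> real \<Rightarrow> bool" where
  "dir_deriv U \<phi> f t v D \<longleftrightarrow>
     ((\<lambda>h. f (inv_into U \<phi> (\<phi> t + h *\<^sub>R v))) has_real_derivative D) (at 0 within {0..})"

end

theory Submission
  imports Defs
begin

lemma cone_piece_negligible:
  fixes S :: "'a::euclidean_space set"
  assumes b: "b \<in> Basis" and c: "0 \<le> c" "c < 1"
    and cone: "\<And>z1 z2. z1 \<in> S \<Longrightarrow> z2 \<in> S \<Longrightarrow> \<bar>b \<bullet> (z2 - z1)\<bar> \<le> c * norm (z2 - z1)"
  shows "negligible S"
proof -
  define P where "P = (\<lambda>y::'a. y - (b \<bullet> y) *\<^sub>R b)"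
  have bb: "b \<bullet> b = 1" using b by simp
  have Pdiff: "P z2 - P z1 = P (z2 - z1)" for z1 z2
    by (simp add: P_def algebra_simps inner_diff_right)
  have normP: "(norm (P w))\<^sup>2 = (norm w)\<^sup>2 - (b \<bullet> w)\<^sup>2" for w
  proof -
    have "(norm (P w))\<^sup>2 = (P w) \<bullet> (P w)" by (simp add: power2_norm_eq_inner)
    also have "\<dots> = w \<bullet> w - (b \<bullet> w)\<^sup>2"
      by (simp add: P_def inner_diff_left inner_diff_right bb inner_commute power2_eq_square)
    also have "w \<bullet> w = (norm w)\<^sup>2" by (simp add: power2_norm_eq_inner)
    finally show ?thesis .
  qed
  have key: "(1 - c) * norm (z2 - z1) \<le> norm (P z2 - P z1)" if "z1 \<in> S" "z2 \<in> S" for z1 z2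
  proof -
    define w where "w = z2 - z1"
    have h1: "\<bar>b \<bullet> w\<bar> \<le> c * norm w" using cone[OF that] w_def by simp
    have h2: "(b \<bullet> w)\<^sup>2 \<le> (c * norm w)\<^sup>2"
      using h1 by (metis abs_ge_zero abs_le_square_iff abs_of_nonneg order_trans power_mono)
    have "((1 - c) * norm w)\<^sup>2 \<le> (norm w)\<^sup>2 - (c * norm w)\<^sup>2"
    proof -
      have "((1 - c) * norm w)\<^sup>2 = (1 - c)\<^sup>2 * (norm w)\<^sup>2" by (simp add: power_mult_distrib)
      also have "\<dots> \<le> (1 - c\<^sup>2) * (norm w)\<^sup>2"
        proof (rule mult_right_mono)
          have "c * c \<le> c" using c by (simp add: mult_left_le_one_le)
          then show "(1 - c)\<^sup>2 \<le> 1 - c\<^sup>2" by (simp add: power2_eq_square algebra_simps)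
        qed simp
      also have "\<dots> = (norm w)\<^sup>2 - (c * norm w)\<^sup>2" by (simp add: power_mult_distrib algebra_simps)
      finally show ?thesis .
    qed
    also have "\<dots> \<le> (norm (P w))\<^sup>2" using normP[of w] h2 by simp
    finally have "((1 - c) * norm w)\<^sup>2 \<le> (norm (P w))\<^sup>2" .
    then have "(1 - c) * norm w \<le> norm (P w)"
      by (rule power2_le_imp_le) simp
    then show ?thesis by (simp add: w_def Pdiff)
  qed
  have inj: "inj_on P S"
  proof
    fix z1 z2 assume "z1 \<in> S" "z2 \<in> S" "P z1 = P z2"
    then have "(1 - c) * norm (z2 - z1) \<le> 0" using key[of z1 z2] by simp
    then have "norm (z2 - z1) \<le> 0" using c by (simp add: mult_le_0_iff)
    then show "z1 = z2" by simp
  qed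
  define g where "g = inv_into S P"
  have Seq: "S = g ` (P ` S)"
    unfolding g_def using inj by (simp add: image_inv_into_cancel inv_into_image_cancel)
  have neg: "negligible (P ` S)"
  proof (rule negligible_subset[OF negligible_hyperplane[of b 0]])
    show "b \<noteq> 0 \<or> (0::real) \<noteq> 0" using b by auto
    show "P ` S \<subseteq> {x. b \<bullet> x = 0}"
      by (auto simp: P_def inner_diff_right bb)
  qed
  have "negligible (g ` (P ` S))"
  proof (rule negligible_locally_Lipschitz_image[OF order_refl neg])
    fix y assume y: "y \<in> P ` S"
    show "\<exists>T B. open T \<and> y \<in> T \<and> (\<forall>y' \<in> P ` S \<inter> T. norm (g y' - g y) \<le> B * norm (y' - y))"
    proof (intro exI conjI ballI)
      show "open UNIV" by simp
      show "y \<in> UNIV" by simp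
      fix y' assume "y' \<in> P ` S \<inter> UNIV"
      then obtain z' where z': "z' \<in> S" "y' = P z'" by auto
      obtain z where z: "z \<in> S" "y = P z" using y by auto
      have gz: "g y = z" "g y' = z'" using inj z z' by (auto simp: g_def)
      have "(1 - c) * norm (z' - z) \<le> norm (y' - y)" using key[OF z(1) z'(1)] z z' by simp
      then show "norm (g y' - g y) \<le> (1 / (1 - c)) * norm (y' - y)"
        using c gz by (simp add: field_simps)
    qed
  qed
  then show ?thesis using Seq by metis
qed

lemma lookup_scaleR_pm: "Poly_Mapping.lookup (r *\<^sub>R (x :: 'a \<Rightarrow>\<^sub>0 real)) i = r * Poly_Mapping.lookup x i"
  unfolding scaleR_poly_mapping_def
  by (subst lookup_Abs_poly_mapping)
     (auto intro: finite_subset[OF _ finite_keys] simp: in_keys_iff)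

lemma lookup_le_norm_pm: "\<bar>Poly_Mapping.lookup (x :: 'a \<Rightarrow>\<^sub>0 real) i\<bar> \<le> norm x"
proof (cases "i \<in> Poly_Mapping.keys x")
  case True
  have "norm x = (\<Sum>n\<in>Poly_Mapping.keys x. \<bar>Poly_Mapping.lookup x n\<bar>)"
    by (simp add: norm_poly_mapping_def dist_poly_mapping_def dist_real_def)
  also have "\<dots> \<ge> \<bar>Poly_Mapping.lookup x i\<bar>"
    using True by (intro member_le_sum) auto
  finally show ?thesis .
next
  case False
  then show ?thesis by (simp add: in_keys_iff)
qed

lemma bounded_linear_lookup_pm: "bounded_linear (\<lambda>x :: 'a \<Rightarrow>\<^sub>0 real. Poly_Mapping.lookup x i)"
  by (rule bounded_linear_intro[where K=1])
     (auto simp: lookup_add lookup_scaleR_pm lookup_le_norm_pm)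

lemma deriv_lookup_pm:
  assumes "(f has_vector_derivative (v :: 'a \<Rightarrow>\<^sub>0 real)) F"
  shows "((\<lambda>h. Poly_Mapping.lookup (f h) i) has_real_derivative Poly_Mapping.lookup v i) F"
proof -
  have "((\<lambda>h. Poly_Mapping.lookup (f h) i) has_derivative (\<lambda>h. Poly_Mapping.lookup (h *\<^sub>R v) i)) F"
    using bounded_linear.has_derivative[OF bounded_linear_lookup_pm assms[unfolded has_vector_derivative_def]] .
  moreover have "(\<lambda>h. Poly_Mapping.lookup (h *\<^sub>R v) i) = (*) (Poly_Mapping.lookup v i)"
    by (rule ext) (simp add: lookup_scaleR_pm)
  ultimately show ?thesis
    by (simp add: has_field_derivative_def)
qed

lemma chart_line:
  assumes ch: "chart_on X d U \<phi>" and t: "t \<in> U" and cv: "curve_vel U \<phi> t \<gamma> v"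
  shows "\<exists>\<epsilon>>0. \<forall>h. 0 \<le> h \<and> h < \<epsilon> \<longrightarrow> \<phi> t + h *\<^sub>R v \<in> \<phi> ` U"
proof -
  have sub: "\<phi> ` U \<subseteq> quadrant d" and op: "openin (top_of_set (quadrant d)) (\<phi> ` U)"
    using ch by (auto simp: chart_on_def)
  obtain e where e: "e > 0" "\<And>y. y \<in> quadrant d \<Longrightarrow> dist y (\<phi> t) < e \<Longrightarrow> y \<in> \<phi> ` U"
    using op t unfolding openin_euclidean_subtopology_iff by blast
  obtain \<epsilon>0 where g0: "\<gamma> 0 = t" and e0: "\<epsilon>0 > 0" and gU: "\<gamma> ` {0..<\<epsilon>0} \<subseteq> U"
    and der: "((\<phi> \<circ> \<gamma>) has_vector_derivative v) (at 0 within {0..<\<epsilon>0})"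
    using cv unfolding curve_vel_def by blast
  have qt: "\<phi> t \<in> quadrant d" using sub t by auto
  have qh: "(\<phi> \<circ> \<gamma>) h \<in> quadrant d" if "h \<in> {0..<\<epsilon>0}" for h
    using sub gU that by (force simp: image_subset_iff)
  have fder: "((\<lambda>h. Poly_Mapping.lookup ((\<phi> \<circ> \<gamma>) h) i) has_real_derivative Poly_Mapping.lookup v i)
       (at 0 within {0..<\<epsilon>0})" for i
    by (rule deriv_lookup_pm[OF der])
  have f0: "Poly_Mapping.lookup ((\<phi> \<circ> \<gamma>) 0) i = Poly_Mapping.lookup (\<phi> t) i" for i
    using g0 by simp
  have quad_lookup: "y \<in> quadrant d \<Longrightarrow> Poly_Mapping.lookup y i \<ge> 0" for y i
    by (simp add: quadrant_def)
  have quad_zero: "y \<in> quadrant d \<Longrightarrow> i \<ge> d \<Longrightarrow> Poly_Mapping.lookup y i = 0" for y i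
    by (auto simp: quadrant_def Rsp_def in_keys_iff)
  have A: "Poly_Mapping.lookup v i = 0" if "i \<ge> d" for i
  proof (rule ccontr)
    assume ne: "Poly_Mapping.lookup v i \<noteq> 0"
    have z: "Poly_Mapping.lookup ((\<phi> \<circ> \<gamma>) h) i = 0" if "h \<in> {0..<\<epsilon>0}" for h
      using quad_zero[OF qh[OF that] \<open>i \<ge> d\<close>] .
    show False
    proof (cases "Poly_Mapping.lookup v i > 0")
      case True
      from has_real_derivative_pos_inc_right[OF fder True]
      obtain d' where d': "d' > 0" "\<And>h. h > 0 \<Longrightarrow> 0 + h \<in> {0..<\<epsilon>0} \<Longrightarrow> h < d' \<Longrightarrow>
          Poly_Mapping.lookup ((\<phi> \<circ> \<gamma>) 0) i < Poly_Mapping.lookup ((\<phi> \<circ> \<gamma>) (0 + h)) i" by blast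
      define h where "h = min d' \<epsilon>0 / 2"
      have "h > 0" "h \<in> {0..<\<epsilon>0}" "h < d'" using d' e0 by (auto simp: h_def)
      with d'(2)[of h] z[of h] z[of 0] e0 show False by simp
    next
      case False
      then have neg: "Poly_Mapping.lookup v i < 0" using ne by simp
      from has_real_derivative_neg_dec_right[OF fder neg]
      obtain d' where d': "d' > 0" "\<And>h. h > 0 \<Longrightarrow> 0 + h \<in> {0..<\<epsilon>0} \<Longrightarrow> h < d' \<Longrightarrow>
          Poly_Mapping.lookup ((\<phi> \<circ> \<gamma>) 0) i > Poly_Mapping.lookup ((\<phi> \<circ> \<gamma>) (0 + h)) i" by blast
      define h where "h = min d' \<epsilon>0 / 2"
      have "h > 0" "h \<in> {0..<\<epsilon>0}" "h < d'" using d' e0 by (auto simp: h_def)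
      with d'(2)[of h] z[of h] z[of 0] e0 show False by simp
    qed
  qed
  have B: "Poly_Mapping.lookup v i \<ge> 0" if "Poly_Mapping.lookup (\<phi> t) i = 0" for i
  proof (rule ccontr)
    assume "\<not> Poly_Mapping.lookup v i \<ge> 0"
    then have neg: "Poly_Mapping.lookup v i < 0" by simp
    from has_real_derivative_neg_dec_right[OF fder neg]
    obtain d' where d': "d' > 0" "\<And>h. h > 0 \<Longrightarrow> 0 + h \<in> {0..<\<epsilon>0} \<Longrightarrow> h < d' \<Longrightarrow>
        Poly_Mapping.lookup ((\<phi> \<circ> \<gamma>) 0) i > Poly_Mapping.lookup ((\<phi> \<circ> \<gamma>) (0 + h)) i" by blast
    define h where "h = min d' \<epsilon>0 / 2"
    have "h > 0" "h \<in> {0..<\<epsilon>0}" "h < d'" using d' e0 by (auto simp: h_def)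
    with d'(2)[of h] f0[of i] that quad_lookup[OF qh[of h], of i] show False by simp
  qed
  define M where "M = insert 1 ((\<lambda>i. Poly_Mapping.lookup (\<phi> t) i) ` {i. i < d \<and> Poly_Mapping.lookup (\<phi> t) i > 0})"
  define m where "m = Min M"
  have finM: "finite M" unfolding M_def by auto
  have mpos: "m > 0" unfolding m_def using finM by (subst Min_gr_iff) (auto simp: M_def)
  have mle: "m \<le> Poly_Mapping.lookup (\<phi> t) i" if "i < d" "Poly_Mapping.lookup (\<phi> t) i > 0" for i
    unfolding m_def using finM that by (intro Min_le) (auto simp: M_def)
  define \<epsilon> where "\<epsilon> = min e m / (norm v + 1)"
  have \<epsilon>pos: "\<epsilon> > 0" using e(1) mpos unfolding \<epsilon>_def by (intro divide_pos_pos) (auto intro: add_nonneg_pos)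
  show ?thesis
  proof (intro exI[of _ \<epsilon>] conjI allI impI \<epsilon>pos)
    fix h :: real assume h: "0 \<le> h \<and> h < \<epsilon>"
    have hn: "h * norm v < min e m"
    proof -
      have nv: "norm v + 1 > 0" by (simp add: add_nonneg_pos)
      have "h * norm v \<le> h * (norm v + 1)" using h by (simp add: mult_left_mono)
      also have "\<dots> < \<epsilon> * (norm v + 1)" using h nv by (intro mult_strict_right_mono) auto
      also have "\<dots> = min e m" using nv by (simp add: \<epsilon>_def)
      finally show ?thesis .
    qed
    define y where "y = \<phi> t + h *\<^sub>R v"
    have ly: "Poly_Mapping.lookup y i = Poly_Mapping.lookup (\<phi> t) i + h * Poly_Mapping.lookup v i" for i
      by (simp add: y_def lookup_add lookup_scaleR_pm)
    have yq: "y \<in> quadrant d"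
    proof -
      have "Poly_Mapping.keys y \<subseteq> {..<d}"
      proof
        fix i assume "i \<in> Poly_Mapping.keys y"
        then have "Poly_Mapping.lookup y i \<noteq> 0" by (simp add: in_keys_iff)
        then show "i \<in> {..<d}" using ly[of i] A[of i] quad_zero[OF qt, of i] by (cases "i < d") auto
      qed
      moreover have "0 \<le> Poly_Mapping.lookup y i" for i
      proof (cases "Poly_Mapping.lookup (\<phi> t) i = 0")
        case True
        then show ?thesis using ly[of i] B[OF True] h by simp
      next
        case False
        then have pos: "Poly_Mapping.lookup (\<phi> t) i > 0" using quad_lookup[OF qt, of i] by simp
        then have id: "i < d" using quad_zero[OF qt, of i] by (cases "i < d") auto
        have "h * \<bar>Poly_Mapping.lookup v i\<bar> \<le> h * norm v" using h lookup_le_norm_pm[of v i]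
          by (simp add: mult_left_mono)
        also have "\<dots> < m" using hn by simp
        also have "\<dots> \<le> Poly_Mapping.lookup (\<phi> t) i" using mle[OF id pos] .
        finally have "h * \<bar>Poly_Mapping.lookup v i\<bar> < Poly_Mapping.lookup (\<phi> t) i" .
        moreover have "- (h * \<bar>Poly_Mapping.lookup v i\<bar>) \<le> h * Poly_Mapping.lookup v i"
        proof -
          have "- \<bar>Poly_Mapping.lookup v i\<bar> \<le> Poly_Mapping.lookup v i" by simp
          then have "h * (- \<bar>Poly_Mapping.lookup v i\<bar>) \<le> h * Poly_Mapping.lookup v i"
            using h by (intro mult_left_mono) auto
          then show ?thesis by simp
        qed
        ultimately show ?thesis using ly[of i] by linarith
      qed
      ultimately show ?thesis by (simp add: quadrant_def Rsp_def)
    qed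
    have "dist y (\<phi> t) < e"
      using hn h by (simp add: y_def dist_norm)
    then show "\<phi> t + h *\<^sub>R v \<in> \<phi> ` U" using e(2)[OF yq] y_def by simp
  qed
qed

lemma chart_inj:
  assumes ch: "chart_on X d U \<phi>"
  shows "inj_on \<phi> U"
proof -
  have "U \<subseteq> topspace X" using ch by (auto simp: chart_on_def dest: openin_subset)
  moreover have "homeomorphic_map (subtopology X U) (top_of_set (\<phi> ` U)) \<phi>"
    using ch by (simp add: chart_on_def)
  then have "inj_on \<phi> (topspace (subtopology X U))"
    by (rule homeomorphic_imp_injective_map)
  ultimately show ?thesis by (simp add: Int_absorb1)
qed

lemma chart_move:
  assumes ch: "chart_on X d U \<phi>" and t: "t \<in> U" and v: "v \<in> coord_vels U \<phi> t \<Gamma>"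
    and dd: "dir_deriv U \<phi> f t v D" and D: "D \<noteq> 0"
  shows "\<exists>p\<in>U. (if D < 0 then f p < f t else f p > f t)"
proof -
  obtain \<gamma> where cv: "curve_vel U \<phi> t \<gamma> v" using v by (auto simp: coord_vels_def)
  obtain \<epsilon> where \<epsilon>: "\<epsilon> > 0" "\<And>h. 0 \<le> h \<Longrightarrow> h < \<epsilon> \<Longrightarrow> \<phi> t + h *\<^sub>R v \<in> \<phi> ` U"
    using chart_line[OF ch t cv] by blast
  define F where "F = (\<lambda>h. f (inv_into U \<phi> (\<phi> t + h *\<^sub>R v)))"
  have der: "(F has_real_derivative D) (at 0 within {0..})"
    using dd by (simp add: dir_deriv_def F_def)
  have F0: "F 0 = f t" using chart_inj[OF ch] t by (simp add: F_def)
  have inU: "inv_into U \<phi> (\<phi> t + h *\<^sub>R v) \<in> U" if "0 \<le> h" "h < \<epsilon>" for h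
    using \<epsilon>(2)[OF that] by (auto intro: inv_into_into)
  show ?thesis
  proof (cases "D < 0")
    case True
    from has_real_derivative_neg_dec_right[OF der True]
    obtain d' where d': "d' > 0" "\<And>h. h > 0 \<Longrightarrow> 0 + h \<in> {0..} \<Longrightarrow> h < d' \<Longrightarrow> F 0 > F (0 + h)" by blast
    define h where "h = min d' \<epsilon> / 2"
    have h: "h > 0" "h < d'" "h < \<epsilon>" using d' \<epsilon> by (auto simp: h_def)
    have "F h < f t" using d'(2)[of h] h F0 by simp
    then show ?thesis using True inU[of h] h by (intro bexI[of _ "inv_into U \<phi> (\<phi> t + h *\<^sub>R v)"]) (auto simp: F_def)
  next
    case False
    then have pos: "D > 0" using D by simp
    from has_real_derivative_pos_inc_right[OF der pos]
    obtain d' where d': "d' > 0" "\<And>h. h > 0 \<Longrightarrow> 0 + h \<in> {0..} \<Longrightarrow> h < d' \<Longrightarrow> F 0 < F (0 + h)" by blast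
    define h where "h = min d' \<epsilon> / 2"
    have h: "h > 0" "h < d'" "h < \<epsilon>" using d' \<epsilon> by (auto simp: h_def)
    have "F h > f t" using d'(2)[of h] h F0 by simp
    then show ?thesis using False inU[of h] h by (intro bexI[of _ "inv_into U \<phi> (\<phi> t + h *\<^sub>R v)"]) (auto simp: F_def)
  qed
qed

lemma cone_set_negligible:
  fixes S :: "'a::euclidean_space set"
  assumes b: "b \<in> Basis" and c: "0 \<le> c" "c < 1" and r: "r > 0"
    and cone: "\<And>z1 z2. z1 \<in> S \<Longrightarrow> z2 \<in> S \<Longrightarrow> norm (z2 - z1) < r \<Longrightarrow> \<bar>b \<bullet> (z2 - z1)\<bar> \<le> c * norm (z2 - z1)"
  shows "negligible S"
proof -
  obtain D :: "'a set" where D: "countable D" "\<And>X. open X \<Longrightarrow> X \<noteq> {} \<Longrightarrow> \<exists>d\<in>D. d \<in> X"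
    using countable_dense_exists by blast
  have "S \<subseteq> (\<Union>d\<in>D. S \<inter> ball d (r/2))"
  proof
    fix z assume "z \<in> S"
    obtain d where "d \<in> D" "d \<in> ball z (r/2)" using D(2)[of "ball z (r/2)"] r by auto
    then show "z \<in> (\<Union>d\<in>D. S \<inter> ball d (r/2))" using \<open>z \<in> S\<close> by (auto simp: dist_commute)
  qed
  moreover have "negligible (\<Union>d\<in>D. S \<inter> ball d (r/2))"
  proof (rule negligible_countable_Union)
    show "countable ((\<lambda>d. S \<inter> ball d (r/2)) ` D)" using D(1) by simp
    fix X assume "X \<in> (\<lambda>d. S \<inter> ball d (r/2)) ` D"
    then obtain d where X: "X = S \<inter> ball d (r/2)" by auto
    show "negligible X"
    proof (rule cone_piece_negligible[OF b c])
      fix z1 z2 assume "z1 \<in> X" "z2 \<in> X"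
      then have "norm (z2 - z1) < r"
      proof -
        assume a: "z1 \<in> X" "z2 \<in> X"
        have "norm (z2 - z1) \<le> norm (d - z1) + norm (d - z2)"
          using norm_triangle_ineq4[of "d - z1" "d - z2"] by simp
        then show ?thesis using a X by (auto simp: dist_norm)
      qed
      then show "\<bar>b \<bullet> (z2 - z1)\<bar> \<le> c * norm (z2 - z1)" using cone \<open>z1 \<in> X\<close> \<open>z2 \<in> X\<close> X by auto
    qed
  qed
  ultimately show ?thesis by (rule negligible_subset[rotated])
qed

lemma cone_forward:
  fixes f :: "'a::euclidean_space \<Rightarrow> real"
  assumes der: "(f has_derivative (\<lambda>h. g \<bullet> h)) (at z)"
    and e: "norm e = 1" and \<delta>: "\<delta> > 0" and ge: "g \<bullet> e \<le> q - \<delta>"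
    and c: "1/2 \<le> c" "c < 1" and K: "norm g \<le> K" "K > 0"
    and cK: "2 * (1 - c) \<le> (\<delta> / (8 * K))\<^sup>2"
  shows "\<exists>\<rho>>0. \<forall>w. norm w < \<rho> \<and> e \<bullet> w > c * norm w \<longrightarrow> f (z + w) < f z + q * (e \<bullet> w)"
proof -
  obtain \<rho> where \<rho>: "\<rho> > 0" "\<And>y. norm (y - z) < \<rho> \<Longrightarrow> norm (f y - f z - g \<bullet> (y - z)) \<le> \<delta>/4 * norm (y - z)"
    using der[unfolded has_derivative_at_alt] \<delta> by (meson divide_pos_pos zero_less_numeral)
  show ?thesis
  proof (intro exI[of _ \<rho>] conjI allI impI \<rho>(1))
    fix w assume w: "norm w < \<rho> \<and> e \<bullet> w > c * norm w"
    define a where "a = e \<bullet> w"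
    define u where "u = w - a *\<^sub>R e"
    have ee: "e \<bullet> e = 1" using e by (simp add: norm_eq_1)
    have a_gt: "a > c * norm w" using w a_def by simp
    have cn0: "c * norm w \<ge> 0" using c by simp
    have apos: "a > 0" using a_gt cn0 by linarith
    have wa: "norm w \<le> 2 * a"
    proof -
      have "(1/2) * norm w \<le> c * norm w" using c by (intro mult_right_mono) auto
      then show ?thesis using a_gt by linarith
    qed
    have u2: "(norm u)\<^sup>2 = (norm w)\<^sup>2 - a\<^sup>2"
    proof -
      have "(norm u)\<^sup>2 = u \<bullet> u" by (simp add: power2_norm_eq_inner)
      also have "\<dots> = w \<bullet> w - a\<^sup>2"
        by (simp add: u_def a_def inner_diff_left inner_diff_right ee inner_commute power2_eq_square)
      also have "w \<bullet> w = (norm w)\<^sup>2" by (simp add: power2_norm_eq_inner)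
      finally show ?thesis .
    qed
    have "(c * norm w)\<^sup>2 \<le> a\<^sup>2"
      using a_gt c by (intro power_mono) auto
    then have "(norm u)\<^sup>2 \<le> (1 - c\<^sup>2) * (norm w)\<^sup>2"
      using u2 by (simp add: power_mult_distrib algebra_simps)
    also have "\<dots> \<le> (2 * (1 - c)) * (norm w)\<^sup>2"
    proof (rule mult_right_mono)
      have "0 \<le> (1 - c) * (1 - c)" by simp
      then show "1 - c\<^sup>2 \<le> 2 * (1 - c)" by (simp add: power2_eq_square algebra_simps)
    qed simp
    also have "\<dots> \<le> (\<delta> / (8 * K))\<^sup>2 * (norm w)\<^sup>2"
      using cK by (intro mult_right_mono) auto
    also have "\<dots> = (\<delta> / (8 * K) * norm w)\<^sup>2" by (simp only: power_mult_distrib)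
    finally have sq: "(norm u)\<^sup>2 \<le> (\<delta> / (8 * K) * norm w)\<^sup>2" .
    have nn: "0 \<le> \<delta> / (8 * K) * norm w"
      using \<delta> K by (intro mult_nonneg_nonneg) auto
    have "norm u \<le> \<delta> / (8 * K) * norm w"
      using power2_le_imp_le[OF sq nn] .
    then have gu: "g \<bullet> u \<le> \<delta> / 8 * norm w"
    proof -
      assume nu: "norm u \<le> \<delta> / (8 * K) * norm w"
      have "g \<bullet> u \<le> norm g * norm u" by (rule norm_cauchy_schwarz)
      also have "\<dots> \<le> K * (\<delta> / (8 * K) * norm w)"
        using nu K by (intro mult_mono) auto
      also have "\<dots> = \<delta> / 8 * norm w" using K by (simp add: field_simps)
      finally show ?thesis .
    qed
    have gw: "g \<bullet> w = a * (g \<bullet> e) + g \<bullet> u"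
      by (simp add: u_def inner_diff_right)
    have "a * (g \<bullet> e) \<le> a * (q - \<delta>)" using apos ge by (intro mult_left_mono) auto
    then have gw2: "g \<bullet> w \<le> a * (q - \<delta>) + \<delta> / 8 * norm w" using gw gu by linarith
    have "norm ((z + w) - z) < \<rho>" using w by simp
    from \<rho>(2)[OF this] have "\<bar>f (z + w) - f z - g \<bullet> w\<bar> \<le> \<delta>/4 * norm w" by simp
    then have "f (z + w) - f z - g \<bullet> w \<le> \<delta>/4 * norm w" by (rule abs_le_D1)
    then have "f (z + w) \<le> f z + a * (q - \<delta>) + 3 * \<delta> / 8 * norm w" using gw2 by linarith
    also have "\<dots> \<le> f z + a * (q - \<delta>) + 3 * \<delta> / 4 * a" 
    proof -
      have "3 * \<delta> / 8 * norm w \<le> 3 * \<delta> / 8 * (2 * a)" using wa \<delta> by (intro mult_left_mono) auto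
      then show ?thesis by simp
    qed
    also have "\<dots> < f z + q * a" using \<delta> apos by (simp add: algebra_simps)
    finally show "f (z + w) < f z + q * (e \<bullet> w)" by (simp add: a_def)
  qed
qed

theorem lemma1:
  fixes J :: "'j set"
    and X :: "'j \<Rightarrow> 'p topology"
    and dim :: "'j \<Rightarrow> nat"
    and atlas :: "'j \<Rightarrow> ('p set \<times> ('p \<Rightarrow> coord)) set"
    and T :: "'p set"
    and A :: "'p \<Rightarrow> (real \<Rightarrow> 'p) set"
    and P :: "'z::euclidean_space measure"
    and Z :: "'z set"
    and Q :: "'p \<Rightarrow> 'z \<Rightarrow> real"
  assumes
    \<comment> \<open>Assumption Absolute Continuity\<close>
    P_prob: "prob_space P"
    and P_borel: "sets P = sets borel"
    and P_ac: "absolutely_continuous lborel P"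
    and Z_meas: "Z \<in> sets borel"
    and Z_full: "measure P Z = 1"
    \<comment> \<open>Assumption Manifold\<close>
    and J_countable: "countable J"
    and T_union: "T = (\<Union>j\<in>J. topspace (X j))"
    and T_disjoint: "disjoint_family_on (\<lambda>j. topspace (X j)) J"
    and T_manifold: "\<And>j. j \<in> J \<Longrightarrow> manifold_with_corners (X j) (dim j) (atlas j)"
    and A_tangent: "\<And>j t. j \<in> J \<Longrightarrow> t \<in> topspace (X j) \<Longrightarrow> A t \<subseteq> tangent_cone_curves (atlas j) t"
    \<comment> \<open>Assumption Continuous Differentiability\<close>
    and Q_cont: "\<And>j. j \<in> J \<Longrightarrow>
       continuous_map (prod_topology (X j) (top_of_set Z)) euclideanreal (\<lambda>(t, z). Q t z)"
    and Q_diff_z: "\<And>j. j \<in> J \<Longrightarrow> \<exists>DZ :: 'p \<Rightarrow> 'z \<Rightarrow> 'z.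
       (\<forall>t\<in>topspace (X j). \<forall>z\<in>Z. ((\<lambda>z'. Q t z') has_derivative (\<lambda>h. DZ t z \<bullet> h)) (at z)) \<and>
       continuous_map (prod_topology (X j) (top_of_set Z)) euclidean (\<lambda>(t, z). DZ t z)"
    and Q_diff_t: "\<And>j U \<phi> v. j \<in> J \<Longrightarrow> (U, \<phi>) \<in> atlas j \<Longrightarrow> \<exists>D :: 'p \<Rightarrow> 'z \<Rightarrow> real.
       (\<forall>t\<in>U. \<forall>z\<in>Z. v \<in> coord_vels U \<phi> t (A t) \<longrightarrow> dir_deriv U \<phi> (\<lambda>t'. Q t' z) t v (D t z)) \<and>
       continuous_map
         (subtopology (prod_topology (X j) (top_of_set Z))
            {(t, z). t \<in> U \<and> z \<in> Z \<and> v \<in> coord_vels U \<phi> t (A t)})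
         euclideanreal (\<lambda>(t, z). D t z)"
    \<comment> \<open>Assumption Generic\<close>
    and generic: "\<And>t s z. t \<in> T \<Longrightarrow> s \<in> T \<Longrightarrow> z \<in> Z \<Longrightarrow> t \<noteq> s \<Longrightarrow>
       Q t z - Q s z \<noteq> 0
       \<or> (\<exists>j\<in>J. t \<in> topspace (X j) \<and> (\<exists>(U, \<phi>)\<in>atlas j. t \<in> U \<and>
            (\<exists>v\<in>coord_vels U \<phi> t (A t). \<exists>D<0. dir_deriv U \<phi> (\<lambda>t'. Q t' z - Q s z) t v D)))
       \<or> (\<exists>j\<in>J. s \<in> topspace (X j) \<and> (\<exists>(U, \<phi>)\<in>atlas j. s \<in> U \<and>
            (\<exists>v\<in>coord_vels U \<phi> s (A s). \<exists>D>0. dir_deriv U \<phi> (\<lambda>s'. Q t z - Q s' z) s v D)))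
       \<or> frechet_derivative (\<lambda>z'. Q t z' - Q s z') (at z) \<noteq> (\<lambda>h. 0)"
  shows "AE z in P. \<forall>t\<in>T. \<forall>s\<in>T.
           (\<forall>u\<in>T. Q t z \<le> Q u z) \<and> (\<forall>u\<in>T. Q s z \<le> Q u z) \<longrightarrow> t = s"
proof -
  interpret P: prob_space P by (rule P_prob)
  have chart: "chart_on (X j) (dim j) U \<phi>" if "j \<in> J" "(U, \<phi>) \<in> atlas j" for j U \<phi>
    using T_manifold[OF that(1)] that(2) by (force simp: manifold_with_corners_def C1_atlas_def)
  have UT: "U \<subseteq> T" if "j \<in> J" "(U, \<phi>) \<in> atlas j" for j U \<phi>
  proof -
    have "openin (X j) U" using chart[OF that] by (simp add: chart_on_def)
    then have "U \<subseteq> topspace (X j)" by (rule openin_subset)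
    then show ?thesis using T_union that(1) by auto
  qed
  have "\<forall>j\<in>J. \<exists>DZ :: 'p \<Rightarrow> 'z \<Rightarrow> 'z.
       \<forall>t\<in>topspace (X j). \<forall>z\<in>Z. ((\<lambda>z'. Q t z') has_derivative (\<lambda>h. DZ t z \<bullet> h)) (at z)"
    using Q_diff_z by metis
  then obtain DZ where DZ: "\<And>j t z. j \<in> J \<Longrightarrow> t \<in> topspace (X j) \<Longrightarrow> z \<in> Z \<Longrightarrow>
      ((\<lambda>z'. Q t z') has_derivative (\<lambda>h. DZ j t z \<bullet> h)) (at z)"
    by metis
  define G where "G t z = DZ (SOME j. j \<in> J \<and> t \<in> topspace (X j)) t z" for t z
  have Gder: "((\<lambda>z'. Q t z') has_derivative (\<lambda>h. G t z \<bullet> h)) (at z)" if "t \<in> T" "z \<in> Z" for t z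
  proof -
    have ex: "\<exists>j. j \<in> J \<and> t \<in> topspace (X j)" using that T_union by auto
    show ?thesis unfolding G_def using someI_ex[OF ex] DZ that(2) by blast
  qed
  define Mn where "Mn z t \<longleftrightarrow> t \<in> T \<and> (\<forall>u\<in>T. Q t z \<le> Q u z)" for z t
  have Gdiff: "G t z \<noteq> G s z" if z: "z \<in> Z" and mt: "Mn z t" and ms: "Mn z s" and ts: "t \<noteq> s" for z t s
  proof
    assume eq: "G t z = G s z"
    have tT: "t \<in> T" and sT: "s \<in> T" using mt ms by (auto simp: Mn_def)
    have qeq: "Q t z = Q s z" using mt ms tT sT by (force simp: Mn_def)
    have nb: False if "\<exists>j\<in>J. t \<in> topspace (X j) \<and> (\<exists>(U, \<phi>)\<in>atlas j. t \<in> U \<and>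
            (\<exists>v\<in>coord_vels U \<phi> t (A t). \<exists>D<0. dir_deriv U \<phi> (\<lambda>t'. Q t' z - Q s z) t v D))"
    proof -
      from that obtain j U \<phi> v D where j: "j \<in> J" "(U, \<phi>) \<in> atlas j" "t \<in> U"
        "v \<in> coord_vels U \<phi> t (A t)" "D < 0" "dir_deriv U \<phi> (\<lambda>t'. Q t' z - Q s z) t v D" by blast
      obtain p where "p \<in> U" "Q p z - Q s z < Q t z - Q s z"
        using chart_move[OF chart[OF j(1,2)] j(3,4,6)] j(5) by auto
      moreover have "p \<in> T" using UT[OF j(1,2)] \<open>p \<in> U\<close> by auto
      ultimately show False using mt by (force simp: Mn_def)
    qed
    have nc: False if "\<exists>j\<in>J. s \<in> topspace (X j) \<and> (\<exists>(U, \<phi>)\<in>atlas j. s \<in> U \<and>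
            (\<exists>v\<in>coord_vels U \<phi> s (A s). \<exists>D>0. dir_deriv U \<phi> (\<lambda>s'. Q t z - Q s' z) s v D))"
    proof -
      from that obtain j U \<phi> v D where j: "j \<in> J" "(U, \<phi>) \<in> atlas j" "s \<in> U"
        "v \<in> coord_vels U \<phi> s (A s)" "D > 0" "dir_deriv U \<phi> (\<lambda>s'. Q t z - Q s' z) s v D" by blast
      obtain p where "p \<in> U" "Q t z - Q p z > Q t z - Q s z"
        using chart_move[OF chart[OF j(1,2)] j(3,4,6)] j(5) by auto
      moreover have "p \<in> T" using UT[OF j(1,2)] \<open>p \<in> U\<close> by auto
      ultimately show False using ms by (force simp: Mn_def)
    qed
    have "((\<lambda>z'. Q t z' - Q s z') has_derivative (\<lambda>h. G t z \<bullet> h - G s z \<bullet> h)) (at z)"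
      by (intro has_derivative_diff Gder tT sT z)
    then have "frechet_derivative (\<lambda>z'. Q t z' - Q s z') (at z) = (\<lambda>h. G t z \<bullet> h - G s z \<bullet> h)"
      by (rule frechet_derivative_at[symmetric])
    then have nd: "frechet_derivative (\<lambda>z'. Q t z' - Q s z') (at z) = (\<lambda>h. 0)"
      using eq by simp
    from generic[OF tT sT z ts] show False
    proof (elim disjE)
      assume "Q t z - Q s z \<noteq> 0" then show False using qeq by simp
    qed (use nb nc nd in blast)+
  qed
  define Sset where "Sset b q c n = {z \<in> Z. \<exists>t s. Mn z t \<and> Mn z s \<and>
      (\<forall>w. norm w < inverse (real (Suc n)) \<and> b \<bullet> w > c * norm w \<longrightarrow> Q t (z + w) < Q t z + q * (b \<bullet> w)) \<and>
      (\<forall>w. norm w < inverse (real (Suc n)) \<and> (- b) \<bullet> w > c * norm w \<longrightarrow> Q s (z + w) < Q s z + q * (b \<bullet> w))}"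
    for b :: 'z and q c :: real and n :: nat
  have nocone: "\<not> b \<bullet> (z2 - z1) > c * norm (z2 - z1)"
    if "z1 \<in> Sset b q c n" "z2 \<in> Sset b q c n" "norm (z2 - z1) < inverse (real (Suc n))" for b q c n z1 z2
  proof
    assume gt: "b \<bullet> (z2 - z1) > c * norm (z2 - z1)"
    have S1: "z1 \<in> Z \<and> (\<exists>t s. Mn z1 t \<and> Mn z1 s \<and>
      (\<forall>w. norm w < inverse (real (Suc n)) \<and> b \<bullet> w > c * norm w \<longrightarrow> Q t (z1 + w) < Q t z1 + q * (b \<bullet> w)) \<and>
      (\<forall>w. norm w < inverse (real (Suc n)) \<and> (- b) \<bullet> w > c * norm w \<longrightarrow> Q s (z1 + w) < Q s z1 + q * (b \<bullet> w)))"
      using that(1) by (simp add: Sset_def)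
    have S2: "z2 \<in> Z \<and> (\<exists>t s. Mn z2 t \<and> Mn z2 s \<and>
      (\<forall>w. norm w < inverse (real (Suc n)) \<and> b \<bullet> w > c * norm w \<longrightarrow> Q t (z2 + w) < Q t z2 + q * (b \<bullet> w)) \<and>
      (\<forall>w. norm w < inverse (real (Suc n)) \<and> (- b) \<bullet> w > c * norm w \<longrightarrow> Q s (z2 + w) < Q s z2 + q * (b \<bullet> w)))"
      using that(2) by (simp add: Sset_def)
    from S1 obtain t1 s1 where t1: "Mn z1 t1" "Mn z1 s1"
      "\<forall>w. norm w < inverse (real (Suc n)) \<and> b \<bullet> w > c * norm w \<longrightarrow> Q t1 (z1 + w) < Q t1 z1 + q * (b \<bullet> w)"
      "\<forall>w. norm w < inverse (real (Suc n)) \<and> (- b) \<bullet> w > c * norm w \<longrightarrow> Q s1 (z1 + w) < Q s1 z1 + q * (b \<bullet> w)"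
      by (elim conjE exE)
    from S2 obtain t2 s2 where s2': "Mn z2 t2" "Mn z2 s2"
      "\<forall>w. norm w < inverse (real (Suc n)) \<and> b \<bullet> w > c * norm w \<longrightarrow> Q t2 (z2 + w) < Q t2 z2 + q * (b \<bullet> w)"
      "\<forall>w. norm w < inverse (real (Suc n)) \<and> (- b) \<bullet> w > c * norm w \<longrightarrow> Q s2 (z2 + w) < Q s2 z2 + q * (b \<bullet> w)"
      by (elim conjE exE)
    note s2 = s2'(2,4)
    have 1: "Q t1 z2 < Q t1 z1 + q * (b \<bullet> (z2 - z1))"
      using spec[OF t1(3), of "z2 - z1"] gt that(3) by simp
    have 2: "Q s2 z1 < Q s2 z2 + q * (b \<bullet> (z1 - z2))"
      using spec[OF s2(2), of "z1 - z2"] gt that(3) by (simp add: norm_minus_commute inner_diff_right)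
    have 3: "Q s2 z2 \<le> Q t1 z2" using s2(1) t1(1) by (simp add: Mn_def)
    have 4: "Q t1 z1 \<le> Q s2 z1" using s2(1) t1(1) by (simp add: Mn_def)
    have 5: "q * (b \<bullet> (z1 - z2)) = - (q * (b \<bullet> (z2 - z1)))" by (simp add: inner_diff_right algebra_simps)
    show False using 1 2 3 4 5 by linarith
  qed
  have Sneg: "negligible (Sset b q c n)" if b: "b \<in> Basis" and c: "0 \<le> c" "c < 1" for b q c n
  proof (rule cone_set_negligible[OF b c, of "inverse (real (Suc n))"])
    show "inverse (real (Suc n)) > 0" by simp
    fix z1 z2 assume z: "z1 \<in> Sset b q c n" "z2 \<in> Sset b q c n" "norm (z2 - z1) < inverse (real (Suc n))"
    have "\<not> b \<bullet> (z2 - z1) > c * norm (z2 - z1)" using nocone[OF z] .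
    moreover have "\<not> b \<bullet> (z1 - z2) > c * norm (z1 - z2)"
      using nocone[OF z(2,1)] z(3) by (simp add: norm_minus_commute)
    ultimately show "\<bar>b \<bullet> (z2 - z1)\<bar> \<le> c * norm (z2 - z1)"
      by (simp add: norm_minus_commute inner_diff_right abs_le_iff)
  qed
  define I :: "('z \<times> real \<times> real \<times> nat) set" where "I = Basis \<times> (\<rat> \<times> ((\<rat> \<inter> {0..<1}) \<times> (UNIV :: nat set)))"
  define N where "N = (\<Union>(b, q, c, n)\<in>I. Sset b q c n)"
  have negN: "negligible N"
    unfolding N_def
  proof (rule negligible_countable_Union)
    show "countable ((\<lambda>(b, q, c, n). Sset b q c n) ` I)"
    proof (rule countable_image)
      have c1: "countable (Basis :: 'z set)" by (rule countable_finite[OF finite_Basis])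
      have c2: "countable (\<rat> \<inter> {0..<1::real})" by (rule countable_Int1[OF countable_rat])
      have c3: "countable ((\<rat> \<inter> {0..<1::real}) \<times> (UNIV :: nat set))" using c2 by (intro countable_SIGMA) auto
      have c4: "countable ((\<rat>::real set) \<times> ((\<rat> \<inter> {0..<1::real}) \<times> (UNIV :: nat set)))"
        using c3 countable_rat by (intro countable_SIGMA) auto
      show "countable I" unfolding I_def using c1 c4 by (rule countable_SIGMA)
    qed
    fix S assume "S \<in> (\<lambda>(b, q, c, n). Sset b q c n) ` I"
    then obtain b q c n where "(b, q, c, n) \<in> I" "S = Sset b q c n" by auto
    then show "negligible S" using Sneg by (auto simp: I_def)
  qed
  have bad: "z \<in> N" if z: "z \<in> Z" and mt: "Mn z t" and ms: "Mn z s" and ts: "t \<noteq> s" for z t s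
  proof -
    have "G t z - G s z \<noteq> 0" using Gdiff[OF z mt ms ts] by simp
    then obtain b where b: "b \<in> Basis" "(G t z - G s z) \<bullet> b \<noteq> 0"
      using euclidean_all_zero_iff by blast
    obtain t' s' where mt': "Mn z t'" and ms': "Mn z s'" and lt: "G t' z \<bullet> b < G s' z \<bullet> b"
    proof (cases "(G t z - G s z) \<bullet> b < 0")
      case True then show ?thesis using that[OF mt ms] by (simp add: inner_diff_left)
    next
      case False then show ?thesis using that[OF ms mt] b(2) by (simp add: inner_diff_left)
    qed
    have tT': "t' \<in> T" and sT': "s' \<in> T" using mt' ms' by (auto simp: Mn_def)
    obtain q where q: "q \<in> \<rat>" "G t' z \<bullet> b < q" "q < G s' z \<bullet> b"
      using Rats_dense_in_real[OF lt] by blast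
    define \<delta> where "\<delta> = min (q - G t' z \<bullet> b) (G s' z \<bullet> b - q)"
    have \<delta>: "\<delta> > 0" using q by (simp add: \<delta>_def)
    define K where "K = norm (G t' z) + norm (G s' z) + 1"
    have K: "K > 0" "norm (G t' z) \<le> K" "norm (G s' z) \<le> K"
      unfolding K_def using norm_ge_zero[of "G t' z"] norm_ge_zero[of "G s' z"] by linarith+
    define \<eta> where "\<eta> = (\<delta> / (8 * K))\<^sup>2 / 2"
    have \<eta>: "\<eta> > 0" using \<delta> K by (simp add: \<eta>_def)
    obtain c where c: "c \<in> \<rat>" "max (1/2) (1 - \<eta>) < c" "c < 1"
      using Rats_dense_in_real[of "max (1/2) (1 - \<eta>)" 1] \<eta> by auto
    have c2: "1/2 \<le> c" "c < 1" using c by auto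
    have cK: "2 * (1 - c) \<le> (\<delta> / (8 * K))\<^sup>2" using c by (simp add: \<eta>_def)
    have bn: "norm b = 1" "norm (- b) = 1" using b(1) by auto
    have ge1: "G t' z \<bullet> b \<le> q - \<delta>" by (simp add: \<delta>_def)
    have ge2: "G s' z \<bullet> (- b) \<le> (- q) - \<delta>" by (simp add: \<delta>_def)
    obtain \<rho>1 where \<rho>1: "\<rho>1 > 0" "\<And>w. norm w < \<rho>1 \<and> b \<bullet> w > c * norm w \<Longrightarrow> Q t' (z + w) < Q t' z + q * (b \<bullet> w)"
      using cone_forward[OF Gder[OF tT' z] bn(1) \<delta> ge1 c2 K(2,1) cK] by blast
    obtain \<rho>2 where \<rho>2: "\<rho>2 > 0" "\<And>w. norm w < \<rho>2 \<and> (- b) \<bullet> w > c * norm w \<Longrightarrow> Q s' (z + w) < Q s' z + (- q) * ((- b) \<bullet> w)"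
      using cone_forward[OF Gder[OF sT' z] bn(2) \<delta> ge2 c2 K(3,1) cK] by blast
    obtain n' :: nat where n': "n' > 0" "inverse (real n') < min \<rho>1 \<rho>2"
      using ex_inverse_of_nat_less[of "min \<rho>1 \<rho>2"] \<rho>1(1) \<rho>2(1) by auto
    define n where "n = n' - 1"
    have nn: "real (Suc n) = real n'" using n' by (simp add: n_def)
    have "z \<in> Sset b q c n"
      unfolding Sset_def
    proof (intro CollectI conjI z, rule exI[of _ t'], rule exI[of _ s'], intro conjI mt' ms' allI impI)
      fix w assume "norm w < inverse (real (Suc n)) \<and> b \<bullet> w > c * norm w"
      then show "Q t' (z + w) < Q t' z + q * (b \<bullet> w)" using \<rho>1(2)[of w] n' nn by simp
    next
      fix w assume "norm w < inverse (real (Suc n)) \<and> (- b) \<bullet> w > c * norm w"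
      then show "Q s' (z + w) < Q s' z + q * (b \<bullet> w)" using \<rho>2(2)[of w] n' nn by simp
    qed
    moreover have "(b, q, c, n) \<in> I" using b(1) q(1) c by (auto simp: I_def)
    ultimately show ?thesis unfolding N_def by blast
  qed
  have "N \<in> null_sets lebesgue" using negN by (simp add: negligible_iff_null_sets)
  then have "\<exists>N'\<in>null_sets lborel. N \<subseteq> N'" by (rule null_sets_completion_iff2[THEN iffD1])
  then obtain N' where N': "N' \<in> null_sets lborel" "N \<subseteq> N'" by blast
  have ae1: "AE z in lborel. z \<notin> N'" using N'(1) by (rule AE_not_in)
  have ae2: "AE z in P. z \<notin> N'"
    by (rule absolutely_continuous_AE[OF _ P_ac ae1]) (simp add: P_borel)
  have ae3: "AE z in P. z \<in> Z" using P.AE_prob_1[OF Z_full] .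
  show ?thesis
    using ae2 ae3
  proof eventually_elim
    case (elim z)
    show ?case
    proof (intro ballI impI)
      fix t s assume "t \<in> T" "s \<in> T" "(\<forall>u\<in>T. Q t z \<le> Q u z) \<and> (\<forall>u\<in>T. Q s z \<le> Q u z)"
      then have "Mn z t" "Mn z s" by (auto simp: Mn_def)
      show "t = s"
      proof (rule ccontr)
        assume "t \<noteq> s"
        then have "z \<in> N" using bad[OF elim(2) \<open>Mn z t\<close> \<open>Mn z s\<close>] by simp
        then show False using N'(2) elim(1) by auto
      qed
    qed
  qed
qed

end
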